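(* Fix an integer $b\ge2$ and $\gamma\in(0,1)$. Let $\phi$ be a real analytic $\mathbb{Z}$-periodic function satisfying condition (H), and assume $\alpha<\min\{1,\frac{\log b}{\log(1/\gamma)}\}$. Then for any $t_0>0$ there exist an integer $t>t_0$, a real number $\Delta_1>0$ and words $\mathbf{h},\mathbf{h}',\mathbf{a}\in\Lambda^t$ such that for every $z\in I_{\mathbf{a}}$ and all $\mathbf{i},\mathbf{j}\in\Lambda^{\#}$ with $\mathbf{h}$ a prefix of $\mathbf{i}$ and $\mathbf{h}'$ a prefix of $\mathbf{j}$: (A.1) $|S'(z,\mathbf{i})|>\Delta_1$ and $|S'(z,\mathbf{j})|>\Delta_1$; (A.2) $|S'(z,\mathbf{i})-S'(z,\mathbf{j})|>\Delta_1$.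
   Context: $\Lambda=\{0,\dots,b-1\}$, $\Lambda^{\#}=\bigcup_{n\ge1}\Lambda^n$, $\Sigma=\Lambda^{\mathbb{Z}_+}$, $\nu$ uniform on $\Lambda$. For a word $\mathbf{j}$ of length $1\le p\le\infty$ and $x\in[0,1]$, $S(x,\mathbf{j})=\sum_{n=1}^p\gamma^{n-1}\phi\big(\frac{x+j_1+j_2b+\cdots+j_nb^{n-1}}{b^n}\big)$, and $S'(x,\mathbf{j})$ is its derivative in $x$. Condition (H): for all $\mathbf{i}\neq\mathbf{j}\in\Sigma$, $x\mapsto S(x,\mathbf{j})-S(x,\mathbf{i})$ is not identically zero. $\alpha$ is the constant such that for Lebesgue-a.e. $x$, the image $m_x$ of $\nu^{\mathbb{Z}_+}$ under $\mathbf{j}\mapsto S(x,\mathbf{j})$ is exact dimensional with dimension $\alpha$. For $\mathbf{a}=a_1\cdots a_t$, $I_{\mathbf{a}}=\big[\frac{a_1+a_2b+\cdots+a_tb^{t-1}}{b^t},\frac{1+a_1+a_2b+\cdots+a_tb^{t-1}}{b^t}\big)$. *)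

theory Defs
  imports "HOL-Probability.Probability"
begin

text \<open>Alphabet Lambda = {0,...,b-1}; finite words are lists over Lambda,
  infinite words (elements of Sigma) are functions nat => nat with values in Lambda
  (index 0 is the first letter j_1).\<close>

definition word_ok :: "nat \<Rightarrow> nat list \<Rightarrow> bool" where
  "word_ok b w \<longleftrightarrow> (\<forall>k\<in>set w. k < b)"

definition seq_ok :: "nat \<Rightarrow> (nat \<Rightarrow> nat) \<Rightarrow> bool" where
  "seq_ok b j \<longleftrightarrow> (\<forall>n. j n < b)"

definition S_fin :: "nat \<Rightarrow> real \<Rightarrow> (real \<Rightarrow> real) \<Rightarrow> real \<Rightarrow> nat list \<Rightarrow> real" where
  "S_fin b \<gamma> \<phi> x w =
     (\<Sum>n<length w. \<gamma> ^ n * \<phi> ((x + (\<Sum>k\<le>n. real (w ! k) * real b ^ k)) / real b ^ (n + 1)))"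

definition S_inf :: "nat \<Rightarrow> real \<Rightarrow> (real \<Rightarrow> real) \<Rightarrow> real \<Rightarrow> (nat \<Rightarrow> nat) \<Rightarrow> real" where
  "S_inf b \<gamma> \<phi> x j =
     (\<Sum>n. \<gamma> ^ n * \<phi> ((x + (\<Sum>k\<le>n. real (j k) * real b ^ k)) / real b ^ (n + 1)))"

definition S'_fin :: "nat \<Rightarrow> real \<Rightarrow> (real \<Rightarrow> real) \<Rightarrow> real \<Rightarrow> nat list \<Rightarrow> real" where
  "S'_fin b \<gamma> \<phi> x w = deriv (\<lambda>y. S_fin b \<gamma> \<phi> y w) x"

definition real_analytic :: "(real \<Rightarrow> real) \<Rightarrow> bool" where
  "real_analytic f \<longleftrightarrow>
     (\<forall>x. \<exists>r>0. \<exists>c::nat \<Rightarrow> real. \<forall>y. \<bar>y - x\<bar> < r \<longrightarrow> (\<lambda>n. c n * (y - x) ^ n) sums f y)"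

definition Z_periodic :: "(real \<Rightarrow> real) \<Rightarrow> bool" where
  "Z_periodic f \<longleftrightarrow> (\<forall>x. f (x + 1) = f x)"

definition cond_H :: "nat \<Rightarrow> real \<Rightarrow> (real \<Rightarrow> real) \<Rightarrow> bool" where
  "cond_H b \<gamma> \<phi> \<longleftrightarrow>
     (\<forall>i j. seq_ok b i \<and> seq_ok b j \<and> i \<noteq> j \<longrightarrow>
        (\<exists>x\<in>{0..1}. S_inf b \<gamma> \<phi> x j - S_inf b \<gamma> \<phi> x i \<noteq> 0))"

definition m_meas :: "nat \<Rightarrow> real \<Rightarrow> (real \<Rightarrow> real) \<Rightarrow> real \<Rightarrow> real measure" where
  "m_meas b \<gamma> \<phi> x =
     distr (PiM UNIV (\<lambda>_::nat. uniform_count_measure {..<b})) borel (\<lambda>j. S_inf b \<gamma> \<phi> x j)"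

definition exact_dimensional :: "real measure \<Rightarrow> real \<Rightarrow> bool" where
  "exact_dimensional m d \<longleftrightarrow>
     (AE y in m. ((\<lambda>r. ln (measure m (ball y r)) / ln r) \<longlongrightarrow> d) (at_right 0))"

definition I_word :: "nat \<Rightarrow> nat list \<Rightarrow> real set" where
  "I_word b a = {(\<Sum>k<length a. real (a ! k) * real b ^ k) / real b ^ length a ..<
                 (1 + (\<Sum>k<length a. real (a ! k) * real b ^ k)) / real b ^ length a}"

end

theory Submission
  imports Defs
begin


lemma geo_tail_bound:
  fixes f :: "nat \<Rightarrow> real"
  assumes q0: "0 \<le> q" and q1: "q < 1" and C0: "0 \<le> C" and hf: "\<And>n. \<bar>f n\<bar> \<le> C * q ^ n"
  shows "summable f" "\<bar>suminf f - (\<Sum>n<m. f n)\<bar> \<le> C * q ^ m / (1 - q)"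
    "m \<le> m' \<Longrightarrow> \<bar>(\<Sum>n<m'. f n) - (\<Sum>n<m. f n)\<bar> \<le> C * q ^ m / (1 - q)"
proof -
  have sg: "summable (\<lambda>n. C * q ^ n)" using q0 q1 by (intro summable_mult summable_geometric) auto
  show sf: "summable f" by (rule summable_comparison_test[OF _ sg]) (use hf in auto)
  have sg2: "summable (\<lambda>n. C * q ^ (n + m))" using sg by (subst summable_iff_shift) 
  have eqs: "(\<Sum>n. C * q ^ (n + m)) = C * q ^ m / (1 - q)"
  proof -
    have "(\<Sum>n. C * q ^ (n + m)) = (\<Sum>n. (C * q^m) * q ^ n)" by (simp add: power_add mult_ac)
    also have "\<dots> = C * q ^ m * (\<Sum>n. q ^ n)" using q0 q1 by (intro suminf_mult) (auto intro: summable_geometric)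
    also have "\<dots> = C * q ^ m / (1 - q)" using q0 q1 by (simp add: suminf_geometric)
    finally show ?thesis .
  qed
  have "suminf f - (\<Sum>n<m. f n) = (\<Sum>n. f (n + m))" using suminf_split_initial_segment[OF sf, of m] by simp
  moreover have "\<bar>\<Sum>n. f (n + m)\<bar> \<le> (\<Sum>n. C * q ^ (n + m))"
  proof -
    have s1: "summable (\<lambda>n. f (n + m))" using sf by (subst summable_iff_shift)
    have "\<bar>\<Sum>n. f (n + m)\<bar> \<le> (\<Sum>n. \<bar>f (n + m)\<bar>)"
      using summable_norm[of "\<lambda>n. f (n+m)"] summable_comparison_test[OF _ sg2, of "\<lambda>n. \<bar>f (n+m)\<bar>"] hf
      by auto
    also have "\<dots> \<le> (\<Sum>n. C * q ^ (n + m))"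
      by (rule suminf_le) (use hf sg2 summable_comparison_test[OF _ sg2, of "\<lambda>n. \<bar>f (n+m)\<bar>"] in auto)
    finally show ?thesis .
  qed
  ultimately show "\<bar>suminf f - (\<Sum>n<m. f n)\<bar> \<le> C * q ^ m / (1 - q)" using eqs by simp
  assume mm: "m \<le> m'"
  obtain l where l: "m' = m + l" using mm le_Suc_ex by blast
  have "(\<Sum>n<m + l. f n) = (\<Sum>n<m. f n) + (\<Sum>n<l. f (n + m))" for l
    by (induction l) (simp_all add: add.commute)
  then have "(\<Sum>n<m'. f n) - (\<Sum>n<m. f n) = (\<Sum>n<m'-m. f (n + m))" using l by simp
  then have e: "(\<Sum>n<m'. f n) - (\<Sum>n<m. f n) = (\<Sum>n<m'-m. f (n + m))" .
  have "\<bar>\<Sum>n<m'-m. f (n + m)\<bar> \<le> (\<Sum>n<m'-m. \<bar>f (n + m)\<bar>)" by (rule sum_abs)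
  also have "\<dots> \<le> (\<Sum>n<m'-m. C * q ^ (n + m))" by (intro sum_mono hf)
  also have "\<dots> \<le> (\<Sum>n. C * q ^ (n + m))" 
    by (rule sum_le_suminf[OF sg2]) (use q0 C0 in auto)
  finally show "\<bar>(\<Sum>n<m'. f n) - (\<Sum>n<m. f n)\<bar> \<le> C * q ^ m / (1 - q)" using e eqs by simp
qed

lemma analytic_C1:
  fixes \<phi> :: "real \<Rightarrow> real"
  assumes "real_analytic \<phi>"
  shows "(\<phi> has_real_derivative deriv \<phi> x) (at x) \<and> isCont (deriv \<phi>) x"
proof -
  obtain r c where r: "r > 0" and hc: "\<And>y. \<bar>y - x\<bar> < r \<Longrightarrow> (\<lambda>n. c n * (y - x) ^ n) sums \<phi> y"
    using assms unfolding real_analytic_def by blast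
  define P where "P z = (\<Sum>n. c n * z ^ n)" for z :: real
  define P' where "P' z = (\<Sum>n. diffs c n * z ^ n)" for z :: real
  have sm: "summable (\<lambda>n. c n * z ^ n)" if "norm z < r" for z :: real
    using hc[of "x + z"] that by (auto simp: sums_iff)
  have dP: "(P has_real_derivative P' z) (at z)" if "norm z < r" for z :: real
    unfolding P_def P'_def by (rule termdiffs_strong'[OF sm that])
  have sm': "summable (\<lambda>n. diffs c n * z ^ n)" if "norm z < r" for z :: real
    by (rule termdiff_converges[OF that sm])
  have cP': "isCont P' z" if "norm z < r" for z :: real
  proof -
    have "norm z < norm ((norm z + r) / 2)" using that r by auto
    moreover have "summable (\<lambda>n. diffs c n * ((norm z + r) / 2) ^ n)"
      using that r by (intro sm') auto
    ultimately show ?thesis unfolding P'_def using isCont_powser by blast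
  qed
  have eqP: "\<phi> y = P (y - x)" if "\<bar>y - x\<bar> < r" for y
    using hc[OF that] unfolding P_def by (simp add: sums_iff)
  have dphi: "(\<phi> has_real_derivative P' (y - x)) (at y)" if "\<bar>y - x\<bar> < r" for y
  proof -
    have "((\<lambda>y. P (y - x)) has_real_derivative P' (y - x) * 1) (at y)"
      by (rule DERIV_chain2[OF dP]) (use that in \<open>auto intro!: derivative_eq_intros\<close>)
    moreover have "open (ball x r)" by simp
    moreover have "y \<in> ball x r" using that by (simp add: dist_real_def abs_minus_commute)
    moreover have "\<And>z. z \<in> ball x r \<Longrightarrow> P (z - x) = \<phi> z"
      using eqP by (simp add: dist_real_def abs_minus_commute)
    ultimately show ?thesis
      using has_field_derivative_transform_within_open[of "\<lambda>y. P (y - x)" "P' (y - x)" y "ball x r" \<phi>] by simp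
  qed
  have dd: "deriv \<phi> y = P' (y - x)" if "\<bar>y - x\<bar> < r" for y
    using dphi[OF that] by (rule DERIV_imp_deriv)
  have "isCont (\<lambda>y. P' (y - x)) x"
    by (rule isCont_o2[OF _ cP']) (use r in \<open>auto intro!: continuous_intros\<close>)
  moreover have ev: "eventually (\<lambda>y. deriv \<phi> y = P' (y - x)) (nhds x)"
    using r dd by (intro eventually_nhds_in_open[of "ball x r", THEN eventually_mono])
      (auto simp: dist_real_def abs_minus_commute)
  ultimately have "isCont (deriv \<phi>) x" using isCont_cong[OF ev] by blast
  moreover have "(\<phi> has_real_derivative deriv \<phi> x) (at x)" using dphi[of x] dd[of x] r by simp
  ultimately show ?thesis by blast
qed



definition dig :: "nat \<Rightarrow> nat \<Rightarrow> nat \<Rightarrow> nat" where "dig b N j = N div b ^ j mod b"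

lemma dig_sum_nat: "(\<Sum>j<m. dig b N j * b ^ j) = N mod b ^ m"
proof (induction m)
  case (Suc m)
  have "N mod b ^ Suc m = b ^ m * (N div b ^ m mod b) + N mod b ^ m"
    using mod_mult2_eq[of N "b^m" b] by (simp add: mult.commute)
  then show ?case using Suc by (simp add: dig_def mult.commute)
qed simp

lemma dig_sum: "(\<Sum>j<m. real (dig b N j) * real b ^ j) = real (N mod b ^ m)"
proof -
  have "real (N mod b ^ m) = real (\<Sum>j<m. dig b N j * b ^ j)" by (simp add: dig_sum_nat)
  also have "\<dots> = (\<Sum>j<m. real (dig b N j) * real b ^ j)" by simp
  finally show ?thesis by simp
qed

lemma dig_ok: "b > 0 \<Longrightarrow> seq_ok b (dig b N)" by (simp add: seq_ok_def dig_def)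

lemma gsum: "(\<Sum>j<n. (real b - 1) * real b ^ j) = real b ^ n - 1"
  by (induction n) (simp_all add: algebra_simps)

lemma sum_digits_le:
  assumes "seq_ok b k"
  shows "0 \<le> (\<Sum>j<m. real (k j) * real b ^ j)" "(\<Sum>j<m. real (k j) * real b ^ j) \<le> real b ^ m - 1"
proof -
  show "0 \<le> (\<Sum>j<m. real (k j) * real b ^ j)" by (intro sum_nonneg) auto
  have "(\<Sum>j<m. real (k j) * real b ^ j) \<le> (\<Sum>j<m. (real b - 1) * real b ^ j)"
  proof (intro sum_mono mult_right_mono)
    fix j assume "j \<in> {..<m}"
    have "k j < b" using assms by (simp add: seq_ok_def)
    then have "k j + 1 \<le> b" by simp
    then have "real (k j) + 1 \<le> real b" by linarith
    then show "real (k j) \<le> real b - 1" by simp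
  qed simp
  then show "(\<Sum>j<m. real (k j) * real b ^ j) \<le> real b ^ m - 1" using gsum by simp
qed

locale wsetup =
  fixes b :: nat and \<gamma> :: real and \<phi> \<psi> :: "real \<Rightarrow> real" and M Mp :: real
  assumes b2: "2 \<le> b" and g0: "0 < \<gamma>" and g1: "\<gamma> < 1"
    and dphi: "\<And>x. (\<phi> has_real_derivative \<psi> x) (at x)"
    and cpsi: "\<And>x. isCont \<psi> x"
    and per: "\<And>x. \<phi> (x + 1) = \<phi> x"
    and Mb: "\<And>x. 0 \<le> x \<Longrightarrow> x \<le> 1 \<Longrightarrow> \<bar>\<psi> x\<bar> \<le> M"
    and Mpb: "\<And>x. 0 \<le> x \<Longrightarrow> x \<le> 1 \<Longrightarrow> \<bar>\<phi> x\<bar> \<le> Mp"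
begin

definition arg where "arg x k n = (x + (\<Sum>j\<le>n. real (k j) * real b ^ j)) / real b ^ (n + 1)"
definition dterm where "dterm x k n = \<gamma> ^ n * \<psi> (arg x k n) / real b ^ (n + 1)"
definition Sd where "Sd x k m = (\<Sum>n<m. dterm x k n)"
definition D where "D x k = suminf (dterm x k)"
definition Sf where "Sf x k m = (\<Sum>n<m. \<gamma> ^ n * \<phi> (arg x k n))"
definition q where "q = \<gamma> / real b"
definition cat where "cat m w k n = (if n < m then w n else k (n - m))"
definition yv where "yv x w m = (x + (\<Sum>j<m. real (w j) * real b ^ j)) / real b ^ m"

lemma M0: "0 \<le> M" using Mb[of 0] by auto
lemma Mp0: "0 \<le> Mp" using Mpb[of 0] by auto
lemma bpos: "real b > 0" "b > 0" using b2 by auto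
lemma b1: "real b \<ge> 2" using b2 by simp
lemma q0: "0 < q" using g0 bpos by (simp add: q_def)
lemma q1: "q < 1" using g1 b1 by (simp add: q_def)
lemma Mq0: "0 \<le> M * q ^ m" using M0 q0 by simp

lemma arg_alt: "arg x k n = (x + (\<Sum>j<n+1. real (k j) * real b ^ j)) / real b ^ (n + 1)"
  unfolding arg_def by (simp add: lessThan_Suc_atMost)

lemma range01:
  assumes "seq_ok b k" "0 \<le> x" "x \<le> 1"
  shows "0 \<le> (x + (\<Sum>j<m. real (k j) * real b ^ j)) / real b ^ m"
        "(x + (\<Sum>j<m. real (k j) * real b ^ j)) / real b ^ m \<le> 1"
  using sum_digits_le[OF assms(1), of m] assms bpos by (auto simp: field_simps)

lemma range01':
  assumes "seq_ok b k" "0 < x" "x < 1"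
  shows "0 < (x + (\<Sum>j<m. real (k j) * real b ^ j)) / real b ^ m"
        "(x + (\<Sum>j<m. real (k j) * real b ^ j)) / real b ^ m < 1"
  using sum_digits_le[OF assms(1), of m] assms bpos by (auto simp: field_simps)

lemma arg01: "seq_ok b k \<Longrightarrow> 0 \<le> x \<Longrightarrow> x \<le> 1 \<Longrightarrow> 0 \<le> arg x k n \<and> arg x k n \<le> 1"
  unfolding arg_alt using range01 by blast

lemma yv01: "seq_ok b k \<Longrightarrow> 0 \<le> x \<Longrightarrow> x \<le> 1 \<Longrightarrow> 0 \<le> yv x k m \<and> yv x k m \<le> 1"
  unfolding yv_def using range01 by blast

lemma yv01': "seq_ok b k \<Longrightarrow> 0 < x \<Longrightarrow> x < 1 \<Longrightarrow> 0 < yv x k m \<and> yv x k m < 1"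
  unfolding yv_def using range01' by blast

lemma dterm_bound:
  assumes "seq_ok b k" "0 \<le> x" "x \<le> 1"
  shows "\<bar>dterm x k n\<bar> \<le> (M / real b) * q ^ n"
proof -
  have a: "\<bar>\<psi> (arg x k n)\<bar> \<le> M" using arg01[OF assms] Mb by blast
  have "\<bar>dterm x k n\<bar> = \<gamma> ^ n * \<bar>\<psi> (arg x k n)\<bar> / real b ^ (n + 1)"
    using g0 bpos by (simp add: dterm_def abs_mult)
  also have "\<dots> \<le> \<gamma> ^ n * M / real b ^ (n + 1)"
    using g0 bpos a by (intro divide_right_mono mult_left_mono) auto
  also have "\<dots> = (M / real b) * q ^ n" by (simp add: q_def power_divide field_simps)
  finally show ?thesis .
qed

lemma Cbound: "(M / real b) * q ^ m / (1 - q) \<le> M * q ^ m"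
proof -
  have "real b * (1 - q) = real b - \<gamma>" using bpos by (simp add: q_def field_simps)
  also have "\<dots> \<ge> 1" using g1 b1 by simp
  finally have h: "real b * (1 - q) \<ge> 1" .
  have "(M / real b) * q ^ m / (1 - q) = M * q ^ m / (real b * (1 - q))"
    by simp
  also have "\<dots> \<le> M * q ^ m / 1" using h Mq0 by (intro divide_left_mono) auto
  finally show ?thesis by simp
qed

lemma D_facts:
  assumes "seq_ok b k" "0 \<le> x" "x \<le> 1"
  shows "summable (dterm x k)" "\<bar>D x k - Sd x k m\<bar> \<le> M * q ^ m"
    "m \<le> m' \<Longrightarrow> \<bar>Sd x k m' - Sd x k m\<bar> \<le> M * q ^ m"
proof -
  note g = geo_tail_bound[of q "M / real b" "dterm x k", OF less_imp_le[OF q0] q1 _ dterm_bound[OF assms]]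
  have c0: "0 \<le> M / real b" using M0 bpos by simp
  show "summable (dterm x k)" using g(1)[OF c0] .
  show "\<bar>D x k - Sd x k m\<bar> \<le> M * q ^ m" using g(2)[OF c0, of m] Cbound[of m] unfolding D_def Sd_def by linarith
  assume "m \<le> m'"
  then show "\<bar>Sd x k m' - Sd x k m\<bar> \<le> M * q ^ m" using g(3)[OF c0, of m m'] Cbound[of m] unfolding Sd_def by linarith
qed

lemma D_bound: "seq_ok b k \<Longrightarrow> 0 \<le> x \<Longrightarrow> x \<le> 1 \<Longrightarrow> \<bar>D x k\<bar> \<le> M"
  using D_facts(2)[of k x 0] by (simp add: Sd_def)

lemma Sd_cong: "(\<And>j. j < m \<Longrightarrow> k j = k' j) \<Longrightarrow> Sd x k m = Sd x k' m"
  unfolding Sd_def dterm_def arg_def by (intro sum.cong refl) (auto intro!: sum.cong)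

lemma Sf_cong: "(\<And>j. j < m \<Longrightarrow> k j = k' j) \<Longrightarrow> Sf x k m = Sf x k' m"
  unfolding Sf_def arg_def by (intro sum.cong refl) (auto intro!: sum.cong)

lemma cat_ok: "seq_ok b w \<Longrightarrow> seq_ok b k \<Longrightarrow> seq_ok b (cat m w k)"
  by (simp add: seq_ok_def cat_def)

lemma sum_split: "(\<Sum>j<m + l. f j) = (\<Sum>j<m. f j) + (\<Sum>j<l. f (m + j))" for f :: "nat \<Rightarrow> real"
  by (induction l) (simp_all add: add.commute)

lemma arg_cat: "arg x (cat m w k) (n + m) = arg (yv x w m) k n"
proof -
  have e0: "(\<Sum>j<m + (n+1). real (cat m w k j) * real b ^ j) = (\<Sum>j<m. real (cat m w k j) * real b ^ j)
     + (\<Sum>j<n+1. real (cat m w k (m+j)) * real b ^ (m+j))" by (rule sum_split)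
  have e1: "(\<Sum>j<m. real (cat m w k j) * real b ^ j) = (\<Sum>j<m. real (w j) * real b ^ j)"
    by (intro sum.cong) (auto simp: cat_def)
  have e2: "(\<Sum>j<n+1. real (cat m w k (m+j)) * real b ^ (m+j)) = real b ^ m * (\<Sum>j<n+1. real (k j) * real b ^ j)"
  proof -
    have "(\<Sum>j<n+1. real (cat m w k (m+j)) * real b ^ (m+j)) = (\<Sum>j<n+1. real b ^ m * (real (k j) * real b ^ j))"
      by (intro sum.cong) (auto simp: cat_def power_add)
    also have "\<dots> = real b ^ m * (\<Sum>j<n+1. real (k j) * real b ^ j)"
      by (rule sum_distrib_left[symmetric])
    finally show ?thesis .
  qed
  have "(\<Sum>j<n+m+1. real (cat m w k j) * real b ^ j)
      = (\<Sum>j<m. real (w j) * real b ^ j) + real b ^ m * (\<Sum>j<n+1. real (k j) * real b ^ j)"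
    using e0 e1 e2 by (simp add: add.commute add.left_commute)
  then show ?thesis unfolding arg_alt yv_def using bpos
    by (simp add: field_simps power_add)
qed

lemma dterm_cat: "dterm x (cat m w k) (n + m) = q ^ m * dterm (yv x w m) k n"
  unfolding dterm_def arg_cat q_def using bpos by (simp add: field_simps power_add power_divide)

lemma D_cat:
  assumes w: "seq_ok b w" and k: "seq_ok b k" and x: "0 \<le> x" "x \<le> 1"
  shows "D x (cat m w k) = Sd x w m + q ^ m * D (yv x w m) k"
proof -
  have s: "summable (dterm x (cat m w k))" using D_facts(1)[OF cat_ok[OF w k] x] .
  have y: "0 \<le> yv x w m" "yv x w m \<le> 1" using yv01[OF w x] by auto
  have s2: "summable (dterm (yv x w m) k)" using D_facts(1)[OF k y] .
  have "D x (cat m w k) = (\<Sum>n. dterm x (cat m w k) (n + m)) + (\<Sum>i<m. dterm x (cat m w k) i)"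
    unfolding D_def by (rule suminf_split_initial_segment[OF s])
  also have "(\<Sum>n. dterm x (cat m w k) (n + m)) = q ^ m * D (yv x w m) k"
    unfolding dterm_cat D_def using suminf_mult[OF s2] by simp
  also have "(\<Sum>i<m. dterm x (cat m w k) i) = Sd x w m"
    unfolding Sd_def[symmetric] by (rule Sd_cong) (simp add: cat_def)
  finally show ?thesis by simp
qed

lemma Sd_cont: "isCont (\<lambda>x. Sd x k m) x"
  unfolding Sd_def dterm_def arg_def
  by (intro continuous_intros isCont_o2[OF _ cpsi]) (use bpos in auto)

lemma comp_deriv: "B \<noteq> 0 \<Longrightarrow> ((\<lambda>x. \<phi> ((x + c) / B)) has_real_derivative \<psi> ((x + c) / B) / B) (at x)"
proof -
  assume B: "B \<noteq> 0"
  have "((\<lambda>x. (x + c) / B) has_real_derivative 1 / B) (at x)"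
    using B by (auto intro!: derivative_eq_intros)
  from DERIV_chain2[OF dphi this] show ?thesis by simp
qed

lemma Sf_deriv: "((\<lambda>x. Sf x k m) has_real_derivative Sd x k m) (at x)"
  unfolding Sf_def Sd_def dterm_def arg_def
proof (intro DERIV_sum)
  fix n
  have "((\<lambda>x. \<gamma> ^ n * \<phi> ((x + (\<Sum>j\<le>n. real (k j) * real b ^ j)) / real b ^ (n + 1)))
      has_real_derivative \<gamma> ^ n * (\<psi> ((x + (\<Sum>j\<le>n. real (k j) * real b ^ j)) / real b ^ (n + 1)) / real b ^ (n + 1))) (at x)"
    by (intro DERIV_cmult comp_deriv) (use bpos in simp)
  then show "((\<lambda>x. \<gamma> ^ n * \<phi> ((x + (\<Sum>j\<le>n. real (k j) * real b ^ j)) / real b ^ (n + 1)))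
      has_real_derivative \<gamma> ^ n * \<psi> ((x + (\<Sum>j\<le>n. real (k j) * real b ^ j)) / real b ^ (n + 1)) / real b ^ (n + 1)) (at x)"
    by simp
qed

end


lemma lim0: "0 \<le> r \<Longrightarrow> r < 1 \<Longrightarrow> (\<lambda>m. C * r ^ m) \<longlonglongrightarrow> (0::real)"
  using tendsto_mult[OF tendsto_const[of C] LIMSEQ_power_zero[of r]] by simp

lemma ev_small: "0 \<le> r \<Longrightarrow> r < 1 \<Longrightarrow> e > 0 \<Longrightarrow> \<exists>N. \<forall>m\<ge>N. C * r ^ m < (e::real)"
proof -
  assume r: "0 \<le> r" "r < 1" and e: "e > 0"
  have "(\<lambda>m. C * r ^ m) \<longlonglongrightarrow> 0" by (rule lim0[OF r])
  from order_tendstoD(2)[OF this e] show ?thesis by (simp add: eventually_sequentially)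
qed

lemma cont_eps:
  fixes f :: "real \<Rightarrow> real"
  assumes "isCont f x" "e > 0"
  shows "\<exists>d>0. \<forall>y. \<bar>y - x\<bar> < d \<longrightarrow> \<bar>f y - f x\<bar> < e"
proof -
  from assms obtain d where d: "d > 0" "\<forall>y. y \<noteq> x \<and> norm (y - x) < d \<longrightarrow> norm (f y - f x) < e"
    unfolding isCont_def LIM_eq by blast
  show ?thesis
  proof (intro exI[of _ d] conjI allI impI)
    fix y assume "\<bar>y - x\<bar> < d"
    then show "\<bar>f y - f x\<bar> < e" using d assms(2) by (cases "y = x") auto
  qed (use d in auto)
qed

context wsetup begin

definition goodT where "goodT \<longleftrightarrow> (\<exists>m x0 k k'. 0 < x0 \<and> x0 < 1 \<and> seq_ok b k \<and> seq_ok b k' \<and>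
   \<bar>Sd x0 k m\<bar> > M * q ^ m \<and> \<bar>Sd x0 k' m\<bar> > M * q ^ m \<and> \<bar>Sd x0 k m - Sd x0 k' m\<bar> > 2 * M * q ^ m)"

lemma trich:
  assumes nT: "\<not> goodT" and x: "0 < x" "x < 1" and k: "seq_ok b k" and k': "seq_ok b k'"
  shows "D x k = 0 \<or> D x k' = 0 \<or> D x k = D x k'"
proof (rule ccontr)
  assume c: "\<not> ?thesis"
  define \<delta> where "\<delta> = min \<bar>D x k\<bar> (min \<bar>D x k'\<bar> \<bar>D x k - D x k'\<bar>)"
  have \<delta>0: "\<delta> > 0" using c by (auto simp: \<delta>_def)
  obtain N where N: "\<forall>m\<ge>N. (4 * M) * q ^ m < \<delta>" using ev_small[OF less_imp_le[OF q0] q1 \<delta>0] by blast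
  have a: "4 * M * q ^ N < \<delta>" using N by auto
  have t1: "\<bar>D x k - Sd x k N\<bar> \<le> M * q ^ N" "\<bar>D x k' - Sd x k' N\<bar> \<le> M * q ^ N"
    using D_facts(2)[OF k, of x N] D_facts(2)[OF k', of x N] x by simp_all
  have d1: "\<delta> \<le> \<bar>D x k\<bar>" "\<delta> \<le> \<bar>D x k'\<bar>" "\<delta> \<le> \<bar>D x k - D x k'\<bar>" by (auto simp: \<delta>_def)
  have "\<bar>Sd x k N\<bar> > M * q ^ N" "\<bar>Sd x k' N\<bar> > M * q ^ N" "\<bar>Sd x k N - Sd x k' N\<bar> > 2 * M * q ^ N"
    using t1 d1 a Mq0[of N] by linarith+
  then have "goodT" unfolding goodT_def using x k k' by blast
  then show False using nT by blast
qed

lemma Dconst: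
  assumes nT: "\<not> goodT" and x: "0 < x" "x < 1" and k1: "seq_ok b k1" and k2: "seq_ok b k2"
  shows "D x k1 = D x k2"
proof (rule ccontr)
  assume ne: "D x k1 \<noteq> D x k2"
  define s where "s = \<bar>D x k1 - D x k2\<bar>"
  have s0: "s > 0" using ne by (simp add: s_def)
  have B1: "D x k = D x k' \<or> \<bar>D x k - D x k'\<bar> = s" if k: "seq_ok b k" and k': "seq_ok b k'" for k k'
  proof -
    define v where "v = D x k1 + D x k2"
    have vals: "D x k = 0 \<or> D x k = v" if "seq_ok b k" for k
      using trich[OF nT x that k1] trich[OF nT x that k2] trich[OF nT x k1 k2] ne unfolding v_def by auto
    have sv: "s = \<bar>v\<bar>" using trich[OF nT x k1 k2] ne unfolding s_def v_def by auto
    show ?thesis using vals[OF k] vals[OF k'] sv by auto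
  qed
  obtain m0 where m0: "\<forall>m\<ge>m0. (2 * M) * q ^ m < s" using ev_small[OF less_imp_le[OF q0] q1 s0] by blast
  have B2: "D (yv x w m) p = D (yv x w m) p'"
    if m: "m \<ge> m0" and w: "seq_ok b w" and p: "seq_ok b p" and p': "seq_ok b p'" for m w p p'
  proof -
    define y where "y = yv x w m"
    have y01: "0 \<le> y" "y \<le> 1" using yv01[OF w, of x m] x by (auto simp: y_def)
    have e: "D x (cat m w p) - D x (cat m w p') = q ^ m * (D y p - D y p')"
      using D_cat[OF w p, of x m] D_cat[OF w p', of x m] x unfolding y_def by (simp add: algebra_simps)
    have "\<bar>D y p - D y p'\<bar> \<le> 2 * M" using D_bound[OF p y01] D_bound[OF p' y01] by linarith
    then have "\<bar>q ^ m * (D y p - D y p')\<bar> \<le> q ^ m * (2 * M)"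
      using q0 by (simp add: abs_mult mult_left_mono)
    also have "\<dots> < s" using m0 m by (simp add: mult_ac)
    finally have "\<bar>D x (cat m w p) - D x (cat m w p')\<bar> < s" using e by simp
    then have "D x (cat m w p) = D x (cat m w p')" using B1[OF cat_ok[OF w p] cat_ok[OF w p']] by auto
    then have "q ^ m * (D y p - D y p') = 0" using e by simp
    then show ?thesis using q0 unfolding y_def by simp
  qed
  have s3: "s / 3 > 0" using s0 by simp
  obtain j where j: "\<forall>m\<ge>j. (4 * M) * q ^ m < s / 3" using ev_small[OF less_imp_le[OF q0] q1 s3] by blast
  obtain d1 where d1: "d1 > 0" "\<forall>y. \<bar>y - x\<bar> < d1 \<longrightarrow> \<bar>Sd y k1 j - Sd x k1 j\<bar> < s / 3"
    using cont_eps[OF Sd_cont s3] by blast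
  obtain d2 where d2: "d2 > 0" "\<forall>y. \<bar>y - x\<bar> < d2 \<longrightarrow> \<bar>Sd y k2 j - Sd x k2 j\<bar> < s / 3"
    using cont_eps[OF Sd_cont s3] by blast
  have dd: "min d1 d2 > 0" using d1 d2 by simp
  have ib: "0 \<le> 1 / real b" "1 / real b < 1" using b1 by auto
  obtain N' where N': "\<forall>m\<ge>N'. 1 * (1 / real b) ^ m < min d1 d2" using ev_small[OF ib dd] by blast
  define m where "m = max m0 N'"
  have mm: "m \<ge> m0" "(1 / real b) ^ m < min d1 d2" using N' by (auto simp: m_def)
  define B where "B = real b ^ m"
  have B0: "B > 0" using bpos by (simp add: B_def)
  define N where "N = nat \<lfloor>x * B\<rfloor>"
  have xB0: "x * B \<ge> 0" using x B0 by simp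
  have N1: "real N \<le> x * B" "x * B < real N + 1" using xB0 unfolding N_def by linarith+
  have "x * B < 1 * B" using x B0 by (intro mult_strict_right_mono) auto
  then have "real N < B" using N1 by simp
  then have NB: "N < b ^ m" unfolding B_def by (metis of_nat_less_iff of_nat_power)
  define w where "w = dig b N"
  have w: "seq_ok b w" unfolding w_def using dig_ok bpos by blast
  have yeq: "yv x w m = (x + real N) / B"
    unfolding yv_def w_def dig_sum B_def using NB by simp
  have "\<bar>yv x w m - x\<bar> = \<bar>x + real N - x * B\<bar> / B" using B0 unfolding yeq by (simp add: field_simps)
  also have "\<dots> < 1 / B" using N1 x B0 by (intro divide_strict_right_mono) auto
  also have "1 / B = (1 / real b) ^ m" by (simp add: B_def power_one_over)
  finally have yd: "\<bar>yv x w m - x\<bar> < min d1 d2" using mm by simp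
  define y where "y = yv x w m"
  have y01: "0 < y" "y < 1" using yv01'[OF w x] by (auto simp: y_def)
  have Dy: "D y k1 = D y k2" using B2[OF mm(1) w k1 k2] by (simp add: y_def)
  have t: "\<bar>D x k1 - Sd x k1 j\<bar> \<le> M * q ^ j" "\<bar>D x k2 - Sd x k2 j\<bar> \<le> M * q ^ j"
     "\<bar>D y k1 - Sd y k1 j\<bar> \<le> M * q ^ j" "\<bar>D y k2 - Sd y k2 j\<bar> \<le> M * q ^ j"
    using D_facts(2)[OF k1, of x j] D_facts(2)[OF k2, of x j] D_facts(2)[OF k1, of y j] D_facts(2)[OF k2, of y j] x y01 by simp_all
  have c: "\<bar>Sd y k1 j - Sd x k1 j\<bar> < s / 3" "\<bar>Sd y k2 j - Sd x k2 j\<bar> < s / 3"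
    using d1 d2 yd unfolding y_def by auto
  have "4 * M * q ^ j < s / 3" using j by auto
  then have "\<bar>D x k1 - D x k2\<bar> < s" using t c Dy unfolding abs_le_iff abs_less_iff by linarith
  then show False by (simp add: s_def)
qed

lemma S_inf_arg: "S_inf b \<gamma> \<phi> x k = (\<Sum>n. \<gamma> ^ n * \<phi> (arg x k n))"
  by (simp add: S_inf_def arg_def)

lemma S_facts:
  assumes k: "seq_ok b k" and x: "0 \<le> x" "x \<le> 1"
  shows "\<bar>S_inf b \<gamma> \<phi> x k - Sf x k m\<bar> \<le> Mp * \<gamma> ^ m / (1 - \<gamma>)" "\<bar>S_inf b \<gamma> \<phi> x k\<bar> \<le> Mp / (1 - \<gamma>)"
proof -
  have hb: "\<bar>\<gamma> ^ n * \<phi> (arg x k n)\<bar> \<le> Mp * \<gamma> ^ n" for n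
  proof -
    have "\<bar>\<phi> (arg x k n)\<bar> \<le> Mp" using arg01[OF k x] Mpb by blast
    then show ?thesis using g0 by (simp add: abs_mult mult_left_mono mult.commute)
  qed
  note g = geo_tail_bound[of \<gamma> Mp "\<lambda>n. \<gamma> ^ n * \<phi> (arg x k n)", OF less_imp_le[OF g0] g1 Mp0 hb]
  show "\<bar>S_inf b \<gamma> \<phi> x k - Sf x k m\<bar> \<le> Mp * \<gamma> ^ m / (1 - \<gamma>)"
    using g(2)[of m] unfolding S_inf_arg Sf_def by simp
  show "\<bar>S_inf b \<gamma> \<phi> x k\<bar> \<le> Mp / (1 - \<gamma>)"
    using g(2)[of 0] unfolding S_inf_arg by simp
qed

lemma Sconst:
  assumes nT: "\<not> goodT" and x: "0 \<le> x" "x \<le> 1" and k: "seq_ok b k" and k': "seq_ok b k'"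
  shows "S_inf b \<gamma> \<phi> x k - S_inf b \<gamma> \<phi> x k' = S_inf b \<gamma> \<phi> 0 k - S_inf b \<gamma> \<phi> 0 k'"
proof -
  have fm: "\<bar>(Sf x k m - Sf x k' m) - (Sf 0 k m - Sf 0 k' m)\<bar> \<le> 2 * M * q ^ m" for m
  proof -
    define f where "f y = Sf y k m - Sf y k' m" for y
    have df: "(f has_real_derivative (Sd y k m - Sd y k' m)) (at y)" for y
      unfolding f_def by (intro DERIV_diff Sf_deriv)
    have "\<bar>f x - f 0\<bar> \<le> 2 * M * q ^ m"
    proof (cases "x = 0")
      case True then show ?thesis using Mq0[of m] by simp
    next
      case False
      then have x0: "0 < x" using x by simp
      have cont: "continuous_on {0..x} f"
        using df by (meson DERIV_isCont continuous_at_imp_continuous_on)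
      have dif: "f differentiable (at z)" if "0 < z" "z < x" for z
        using df real_differentiable_def by blast
      obtain l z where lz: "0 < z" "z < x" "DERIV f z :> l" "f x - f 0 = (x - 0) * l"
        using MVT[OF x0 cont dif] by blast
      have l: "l = Sd z k m - Sd z k' m" using DERIV_unique[OF lz(3) df] .
      have Dz: "D z k = D z k'" using Dconst[OF nT _ _ k k'] lz x by auto
      have "\<bar>D z k - Sd z k m\<bar> \<le> M * q ^ m" "\<bar>D z k' - Sd z k' m\<bar> \<le> M * q ^ m"
        using D_facts(2)[OF k, of z m] D_facts(2)[OF k', of z m] lz x by simp_all
      then have lb: "\<bar>l\<bar> \<le> 2 * M * q ^ m" using l Dz by linarith
      have "\<bar>f x - f 0\<bar> = x * \<bar>l\<bar>" using lz x0 by (simp add: abs_mult)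
      also have "\<dots> \<le> 1 * \<bar>l\<bar>" using x by (intro mult_right_mono) auto
      finally show ?thesis using lb by simp
    qed
    then show ?thesis unfolding f_def by simp
  qed
  define A where "A = (S_inf b \<gamma> \<phi> x k - S_inf b \<gamma> \<phi> x k') - (S_inf b \<gamma> \<phi> 0 k - S_inf b \<gamma> \<phi> 0 k')"
  have z01: "(0::real) \<le> 0" "(0::real) \<le> 1" by auto
  have Ab: "\<bar>A\<bar> \<le> 2 * M * q ^ m + (4 * Mp / (1 - \<gamma>)) * \<gamma> ^ m" for m
  proof -
    have "\<bar>S_inf b \<gamma> \<phi> x k - Sf x k m\<bar> \<le> Mp * \<gamma> ^ m / (1 - \<gamma>)"
      "\<bar>S_inf b \<gamma> \<phi> x k' - Sf x k' m\<bar> \<le> Mp * \<gamma> ^ m / (1 - \<gamma>)"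
      "\<bar>S_inf b \<gamma> \<phi> 0 k - Sf 0 k m\<bar> \<le> Mp * \<gamma> ^ m / (1 - \<gamma>)"
      "\<bar>S_inf b \<gamma> \<phi> 0 k' - Sf 0 k' m\<bar> \<le> Mp * \<gamma> ^ m / (1 - \<gamma>)"
      using S_facts(1) k k' x z01 by blast+
    moreover have "(4 * Mp / (1 - \<gamma>)) * \<gamma> ^ m = 4 * (Mp * \<gamma> ^ m / (1 - \<gamma>))" by simp
    ultimately show ?thesis using fm[of m] unfolding A_def by linarith
  qed
  have lim: "(\<lambda>m. 2 * M * q ^ m + (4 * Mp / (1 - \<gamma>)) * \<gamma> ^ m) \<longlonglongrightarrow> 0"
    using tendsto_add[OF lim0[of q "2 * M"] lim0[of \<gamma> "4 * Mp / (1 - \<gamma>)"]] q0 q1 g0 g1 by simp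
  have "\<bar>A\<bar> \<le> 0" by (rule LIMSEQ_le_const[OF lim]) (use Ab in blast)
  then show ?thesis unfolding A_def by simp
qed

lemma shift: "S_inf b \<gamma> \<phi> 1 (dig b N) = S_inf b \<gamma> \<phi> 0 (dig b (Suc N))"
  unfolding S_inf_arg
proof (intro arg_cong[where f=suminf] ext)
  fix n
  define P where "P = b ^ (n + 1)"
  have P0: "P > 0" using bpos by (simp add: P_def)
  have a1: "arg 1 (dig b N) n = (1 + real (N mod P)) / real P"
    unfolding arg_alt dig_sum P_def by simp
  have a2: "arg 0 (dig b (Suc N)) n = real (Suc N mod P) / real P"
    unfolding arg_alt dig_sum P_def by simp
  have "\<phi> (arg 1 (dig b N) n) = \<phi> (arg 0 (dig b (Suc N)) n)"
  proof (cases "Suc (N mod P) = P")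
    case True
    then have "arg 1 (dig b N) n = 1" "arg 0 (dig b (Suc N)) n = 0"
      unfolding a1 a2 using P0 mod_Suc[of N P] by (auto simp: field_simps)
    then show ?thesis using per[of 0] by simp
  next
    case False
    then have "Suc N mod P = Suc (N mod P)" using mod_Suc[of N P] by simp
    then show ?thesis unfolding a1 a2 by simp
  qed
  then show "\<gamma> ^ n * \<phi> (arg 1 (dig b N) n) = \<gamma> ^ n * \<phi> (arg 0 (dig b (Suc N)) n)" by simp
qed

lemma T:
  assumes H: "cond_H b \<gamma> \<phi>"
  shows goodT
proof (rule ccontr)
  assume nT: "\<not> goodT"
  let ?S = "S_inf b \<gamma> \<phi>"
  have ok: "seq_ok b (dig b N)" for N using dig_ok bpos by blast
  define \<Delta> where "\<Delta> = ?S 1 (dig b 0) - ?S 0 (dig b 0)"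
  have one: "(0::real) \<le> 1" by simp
  have lin: "?S 0 (dig b N) = ?S 0 (dig b 0) + real N * \<Delta>" for N
  proof (induction N)
    case (Suc N)
    have e1: "?S 1 (dig b N) - ?S 1 (dig b 0) = ?S 0 (dig b N) - ?S 0 (dig b 0)"
      by (rule Sconst[OF nT one order.refl ok ok])
    have e2: "?S 0 (dig b (Suc N)) = ?S 1 (dig b N)" by (rule shift[symmetric])
    have e3: "real (Suc N) * \<Delta> = real N * \<Delta> + \<Delta>" by (simp add: algebra_simps)
    show ?case using Suc.IH e1 e2 e3 \<Delta>_def by linarith
  qed simp
  have bd: "\<bar>?S 0 k\<bar> \<le> Mp / (1 - \<gamma>)" if "seq_ok b k" for k
    using S_facts(2)[OF that order.refl one] .
  have D0: "\<Delta> = 0"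
  proof (rule ccontr)
    assume "\<Delta> \<noteq> 0"
    then have dp: "\<bar>\<Delta>\<bar> > 0" by simp
    obtain N where N: "real N > 2 * (Mp / (1 - \<gamma>)) / \<bar>\<Delta>\<bar>" using reals_Archimedean2 by blast
    have "2 * (Mp / (1 - \<gamma>)) < real N * \<bar>\<Delta>\<bar>" using N pos_divide_less_eq[OF dp] by blast
    moreover have "\<bar>real N * \<Delta>\<bar> \<le> 2 * (Mp / (1 - \<gamma>))"
      using lin[of N] bd[OF ok[of N]] bd[OF ok[of 0]] unfolding abs_le_iff by linarith
    ultimately show False by (simp add: abs_mult)
  qed
  have ne: "dig b 0 \<noteq> dig b 1"
  proof
    assume "dig b 0 = dig b 1"
    then have "dig b 0 0 = dig b 1 0" by simp
    then show False using b2 by (simp add: dig_def)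
  qed
  have "\<exists>x\<in>{0..1}. ?S x (dig b 1) - ?S x (dig b 0) \<noteq> 0"
    using H[unfolded cond_H_def, rule_format, of "dig b 0" "dig b 1"] ok[of 0] ok[of 1] ne by blast
  then obtain x where x: "0 \<le> x" "x \<le> 1" "?S x (dig b 1) - ?S x (dig b 0) \<noteq> 0" by auto
  have "?S x (dig b 1) - ?S x (dig b 0) = ?S 0 (dig b 1) - ?S 0 (dig b 0)"
    by (rule Sconst[OF nT x(1) x(2) ok ok])
  also have "\<dots> = 0" using lin[of 1] D0 by simp
  finally show False using x(3) by simp
qed

end


lemma absd: fixes a b e :: real shows "\<bar>a - b\<bar> \<le> e \<Longrightarrow> \<bar>b\<bar> - e \<le> \<bar>a\<bar>" by arith
lemma absd2: fixes a b c d e :: real shows "\<bar>a - c\<bar> \<le> e \<Longrightarrow> \<bar>b - d\<bar> \<le> e \<Longrightarrow> \<bar>c - d\<bar> - 2 * e \<le> \<bar>a - b\<bar>" by arith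

context wsetup begin

definition lseq where "lseq i j = (if j < length i then i ! j else 0)"

lemma lseq_ok: "word_ok b i \<Longrightarrow> seq_ok b (lseq i)"
  using bpos by (auto simp: word_ok_def seq_ok_def lseq_def)

lemma S_fin_eq: "S_fin b \<gamma> \<phi> x i = Sf x (lseq i) (length i)"
  unfolding S_fin_def Sf_def arg_def
  by (intro sum.cong refl arg_cong[where f="\<lambda>u. \<gamma> ^ _ * \<phi> u"]) (auto simp: lseq_def intro!: sum.cong)

lemma S'_eq: "S'_fin b \<gamma> \<phi> x i = Sd x (lseq i) (length i)"
proof -
  have "(\<lambda>y. S_fin b \<gamma> \<phi> y i) = (\<lambda>y. Sf y (lseq i) (length i))" by (simp add: S_fin_eq)
  then show ?thesis unfolding S'_fin_def using DERIV_imp_deriv[OF Sf_deriv] by simp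
qed

lemma word_map_ok: "seq_ok b k \<Longrightarrow> word_ok b (map k [0..<t])"
  by (auto simp: word_ok_def seq_ok_def)

lemma prefix_lseq:
  assumes "prefix (map k [0..<t]) i" "p < t"
  shows "lseq i p = k p"
proof -
  obtain r where r: "i = map k [0..<t] @ r" using assms(1) prefixE by blast
  then show ?thesis using assms(2) by (simp add: lseq_def nth_append)
qed

lemma final:
  assumes H: "cond_H b \<gamma> \<phi>"
  shows "\<forall>t0>0. \<exists>t::nat. real t > t0 \<and> (\<exists>\<Delta>1>0. \<exists>h h' a.
           length h = t \<and> length h' = t \<and> length a = t \<and>
           word_ok b h \<and> word_ok b h' \<and> word_ok b a \<and>
           (\<forall>z\<in>I_word b a. \<forall>i j. word_ok b i \<and> word_ok b j \<and> i \<noteq> [] \<and> j \<noteq> [] \<and>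
               prefix h i \<and> prefix h' j \<longrightarrow>
               \<bar>S'_fin b \<gamma> \<phi> z i\<bar> > \<Delta>1 \<and> \<bar>S'_fin b \<gamma> \<phi> z j\<bar> > \<Delta>1 \<and>
               \<bar>S'_fin b \<gamma> \<phi> z i - S'_fin b \<gamma> \<phi> z j\<bar> > \<Delta>1))"
proof (intro allI impI)
  fix t0 :: real assume t0: "t0 > 0"
  obtain m x0 k k' where x0: "0 < x0" "x0 < 1" and k: "seq_ok b k" and k': "seq_ok b k'"
    and gd: "\<bar>Sd x0 k m\<bar> > M * q ^ m" "\<bar>Sd x0 k' m\<bar> > M * q ^ m" "\<bar>Sd x0 k m - Sd x0 k' m\<bar> > 2 * M * q ^ m"
    using T[OF H] unfolding goodT_def by blast
  define g where "g z = min (\<bar>Sd z k m\<bar> - M * q ^ m) (min (\<bar>Sd z k' m\<bar> - M * q ^ m) (\<bar>Sd z k m - Sd z k' m\<bar> - 2 * M * q ^ m))" for z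
  have gc: "isCont g x0" unfolding g_def by (intro continuous_intros Sd_cont)
  have gp: "g x0 > 0" using gd by (simp add: g_def)
  have gp2: "g x0 / 2 > 0" using gp by simp
  obtain \<epsilon> where \<epsilon>: "\<epsilon> > 0" "\<forall>z. \<bar>z - x0\<bar> < \<epsilon> \<longrightarrow> \<bar>g z - g x0\<bar> < g x0 / 2"
    using cont_eps[OF gc gp2] by blast
  have ib: "0 \<le> 1 / real b" "1 / real b < 1" using b1 by auto
  obtain N' where N': "\<forall>m\<ge>N'. 1 * (1 / real b) ^ m < \<epsilon>" using ev_small[OF ib \<epsilon>(1)] by blast
  define t where "t = max (max m N') (nat \<lceil>t0\<rceil> + 1)"
  have tm: "m \<le> t" "(1 / real b) ^ t < \<epsilon>" using N' by (auto simp: t_def)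
  have tt0: "real t > t0"
  proof -
    have "real (nat \<lceil>t0\<rceil> + 1) > t0" using t0 by linarith
    moreover have "nat \<lceil>t0\<rceil> + 1 \<le> t" by (simp add: t_def)
    ultimately show ?thesis by linarith
  qed
  define B where "B = real b ^ t"
  have B0: "B > 0" using bpos by (simp add: B_def)
  define N where "N = nat \<lfloor>x0 * B\<rfloor>"
  have xB0: "x0 * B \<ge> 0" using x0 B0 by simp
  have N1: "real N \<le> x0 * B" "x0 * B < real N + 1" using xB0 unfolding N_def by linarith+
  have "x0 * B < 1 * B" using x0 B0 by (intro mult_strict_right_mono) auto
  then have NBr: "real N < B" using N1 by simp
  then have NB: "N < b ^ t" unfolding B_def by (metis of_nat_less_iff of_nat_power)
  then have NB1: "real N + 1 \<le> B" unfolding B_def by (metis Suc_leI of_nat_Suc of_nat_le_iff of_nat_power add.commute)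
  define a where "a = map (dig b N) [0..<t]"
  define h where "h = map k [0..<t]"
  define h' where "h' = map k' [0..<t]"
  have aok: "word_ok b a" unfolding a_def by (rule word_map_ok[OF dig_ok[OF bpos(2)]])
  have asum: "(\<Sum>j<length a. real (a ! j) * real b ^ j) = real N"
  proof -
    have "(\<Sum>j<length a. real (a ! j) * real b ^ j) = (\<Sum>j<t. real (dig b N j) * real b ^ j)"
      unfolding a_def by (intro sum.cong) auto
    also have "\<dots> = real N" using NB by (simp add: dig_sum)
    finally show ?thesis .
  qed
  have Iw: "I_word b a = {real N / B ..< (1 + real N) / B}"
    unfolding I_word_def asum by (simp add: a_def B_def)
  have L: "length h = t \<and> length h' = t \<and> length a = t \<and> word_ok b h \<and> word_ok b h' \<and> word_ok b a"
    using word_map_ok[OF k] word_map_ok[OF k'] aok by (simp add: h_def h'_def a_def)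
  have R: "\<forall>z\<in>I_word b a. \<forall>i j. word_ok b i \<and> word_ok b j \<and> i \<noteq> [] \<and> j \<noteq> [] \<and>
               prefix h i \<and> prefix h' j \<longrightarrow>
               \<bar>S'_fin b \<gamma> \<phi> z i\<bar> > g x0 / 2 \<and> \<bar>S'_fin b \<gamma> \<phi> z j\<bar> > g x0 / 2 \<and>
               \<bar>S'_fin b \<gamma> \<phi> z i - S'_fin b \<gamma> \<phi> z j\<bar> > g x0 / 2"
  proof (intro ballI allI impI conjI)
    fix z i j
    assume z: "z \<in> I_word b a"
    assume ij: "word_ok b i \<and> word_ok b j \<and> i \<noteq> [] \<and> j \<noteq> [] \<and> prefix h i \<and> prefix h' j"
    have zr: "real N / B \<le> z" "z < (1 + real N) / B" using z Iw by auto
    have z01: "0 \<le> z" "z \<le> 1"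
    proof -
      show "0 \<le> z" using zr(1) B0 by (smt (verit) divide_nonneg_pos of_nat_0_le_iff)
      have "(1 + real N) / B \<le> 1" using NB1 B0 by simp
      then show "z \<le> 1" using zr(2) by simp
    qed
    have "\<bar>z - x0\<bar> < 1 / B"
    proof -
      have "real N \<le> z * B" "z * B < 1 + real N" using zr B0 by (simp_all add: field_simps)
      then have "\<bar>z * B - x0 * B\<bar> < 1" using N1 by linarith
      then have "\<bar>z - x0\<bar> * B < 1" by (metis abs_of_pos B0 abs_mult left_diff_distrib)
      then show ?thesis using B0 by (simp add: field_simps)
    qed
    also have "1 / B = (1 / real b) ^ t" by (simp add: B_def power_one_over)
    finally have zx: "\<bar>z - x0\<bar> < \<epsilon>" using tm by simp
    have "\<bar>g z - g x0\<bar> < g x0 / 2" using \<epsilon>(2) zx by blast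
    then have gz: "g z > g x0 / 2" unfolding abs_less_iff by linarith
    have iok: "seq_ok b (lseq i)" "seq_ok b (lseq j)" using ij lseq_ok by auto
    have li: "length i \<ge> t" "length j \<ge> t" using ij prefix_length_le unfolding h_def h'_def
      by fastforce+
    have c1: "Sd z (lseq i) m = Sd z k m"
      by (rule Sd_cong, rule prefix_lseq[of k t i]) (use ij tm in \<open>auto simp: h_def\<close>)
    have c2: "Sd z (lseq j) m = Sd z k' m"
      by (rule Sd_cong, rule prefix_lseq[of k' t j]) (use ij tm in \<open>auto simp: h'_def\<close>)
    have e1: "\<bar>S'_fin b \<gamma> \<phi> z i - Sd z k m\<bar> \<le> M * q ^ m"
      unfolding S'_eq c1[symmetric] by (rule D_facts(3)[OF iok(1) z01]) (use li tm in linarith)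
    have e2: "\<bar>S'_fin b \<gamma> \<phi> z j - Sd z k' m\<bar> \<le> M * q ^ m"
      unfolding S'_eq c2[symmetric] by (rule D_facts(3)[OF iok(2) z01]) (use li tm in linarith)
    have g1: "g z \<le> \<bar>Sd z k m\<bar> - M * q ^ m" "g z \<le> \<bar>Sd z k' m\<bar> - M * q ^ m"
      "g z \<le> \<bar>Sd z k m - Sd z k' m\<bar> - 2 * M * q ^ m" by (auto simp: g_def)
    show "\<bar>S'_fin b \<gamma> \<phi> z i\<bar> > g x0 / 2" using absd[OF e1] g1 gz by linarith
    show "\<bar>S'_fin b \<gamma> \<phi> z j\<bar> > g x0 / 2" using absd[OF e2] g1 gz by linarith
    show "\<bar>S'_fin b \<gamma> \<phi> z i - S'_fin b \<gamma> \<phi> z j\<bar> > g x0 / 2" using absd2[OF e1 e2] g1 gz by linarith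
  qed
  have "\<exists>\<Delta>1>0. \<exists>h h' a.
           length h = t \<and> length h' = t \<and> length a = t \<and>
           word_ok b h \<and> word_ok b h' \<and> word_ok b a \<and>
           (\<forall>z\<in>I_word b a. \<forall>i j. word_ok b i \<and> word_ok b j \<and> i \<noteq> [] \<and> j \<noteq> [] \<and>
               prefix h i \<and> prefix h' j \<longrightarrow>
               \<bar>S'_fin b \<gamma> \<phi> z i\<bar> > \<Delta>1 \<and> \<bar>S'_fin b \<gamma> \<phi> z j\<bar> > \<Delta>1 \<and>
               \<bar>S'_fin b \<gamma> \<phi> z i - S'_fin b \<gamma> \<phi> z j\<bar> > \<Delta>1)"
    by (rule exI[of _ "g x0 / 2"], rule conjI[OF gp2], rule exI[of _ h], rule exI[of _ h'], rule exI[of _ a])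
       (use L R in blast)
  then show "\<exists>t::nat. real t > t0 \<and> (\<exists>\<Delta>1>0. \<exists>h h' a.
           length h = t \<and> length h' = t \<and> length a = t \<and>
           word_ok b h \<and> word_ok b h' \<and> word_ok b a \<and>
           (\<forall>z\<in>I_word b a. \<forall>i j. word_ok b i \<and> word_ok b j \<and> i \<noteq> [] \<and> j \<noteq> [] \<and>
               prefix h i \<and> prefix h' j \<longrightarrow>
               \<bar>S'_fin b \<gamma> \<phi> z i\<bar> > \<Delta>1 \<and> \<bar>S'_fin b \<gamma> \<phi> z j\<bar> > \<Delta>1 \<and>
               \<bar>S'_fin b \<gamma> \<phi> z i - S'_fin b \<gamma> \<phi> z j\<bar> > \<Delta>1))"
    using tt0 by blast
qed

end

theorem theorem6p1:
  fixes b :: nat and \<gamma> :: real and \<phi> :: "real \<Rightarrow> real" and \<alpha> :: real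
  assumes hb: "b \<ge> 2"
    and h\<gamma>: "0 < \<gamma>" "\<gamma> < 1"
    and han: "real_analytic \<phi>"
    and hper: "Z_periodic \<phi>"
    and hH: "cond_H b \<gamma> \<phi>"
    and h\<alpha>: "AE x in lborel. x \<in> {0..1} \<longrightarrow> exact_dimensional (m_meas b \<gamma> \<phi> x) \<alpha>"
    and h\<alpha>lt: "\<alpha> < min 1 (ln (real b) / ln (1 / \<gamma>))"
  shows "\<forall>t0>0. \<exists>t::nat. real t > t0 \<and> (\<exists>\<Delta>1>0. \<exists>h h' a.
           length h = t \<and> length h' = t \<and> length a = t \<and>
           word_ok b h \<and> word_ok b h' \<and> word_ok b a \<and>
           (\<forall>z\<in>I_word b a. \<forall>i j. word_ok b i \<and> word_ok b j \<and> i \<noteq> [] \<and> j \<noteq> [] \<and>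
               prefix h i \<and> prefix h' j \<longrightarrow>
               \<bar>S'_fin b \<gamma> \<phi> z i\<bar> > \<Delta>1 \<and> \<bar>S'_fin b \<gamma> \<phi> z j\<bar> > \<Delta>1 \<and>
               \<bar>S'_fin b \<gamma> \<phi> z i - S'_fin b \<gamma> \<phi> z j\<bar> > \<Delta>1))"

proof -
  have d: "(\<phi> has_real_derivative deriv \<phi> x) (at x)" "isCont (deriv \<phi>) x" for x
    using analytic_C1[OF han] by blast+
  have c\<psi>: "continuous_on {0..1} (deriv \<phi>)" using d(2) by (simp add: continuous_at_imp_continuous_on)
  have c\<phi>: "continuous_on {0..1} \<phi>" using d(1) by (meson DERIV_isCont continuous_at_imp_continuous_on)
  obtain M where M: "\<forall>y\<in>deriv \<phi> ` {0..1}. norm y \<le> M"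
    using compact_imp_bounded[OF compact_continuous_image[OF c\<psi> compact_Icc]] unfolding bounded_iff by blast
  obtain Mp where Mp: "\<forall>y\<in>\<phi> ` {0..1}. norm y \<le> Mp"
    using compact_imp_bounded[OF compact_continuous_image[OF c\<phi> compact_Icc]] unfolding bounded_iff by blast
  interpret W: wsetup b \<gamma> \<phi> "deriv \<phi>" M Mp
  proof
    show "2 \<le> b" "0 < \<gamma>" "\<gamma> < 1" using hb h\<gamma> by auto
    show "\<And>x. (\<phi> has_real_derivative deriv \<phi> x) (at x)" "\<And>x. isCont (deriv \<phi>) x" using d by auto
    show "\<And>x. \<phi> (x + 1) = \<phi> x" using hper by (simp add: Z_periodic_def)
    show "\<And>x. 0 \<le> x \<Longrightarrow> x \<le> 1 \<Longrightarrow> \<bar>deriv \<phi> x\<bar> \<le> M" using M by auto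
    show "\<And>x. 0 \<le> x \<Longrightarrow> x \<le> 1 \<Longrightarrow> \<bar>\<phi> x\<bar> \<le> Mp" using Mp by auto
  qed
  show ?thesis by (rule W.final[OF hH])
qed


end
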